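(* Let $k\ge 2$ and $X=J(2k,k,1)\cup J(2k,k,2)\cup\cdots\cup J(2k,k,k-1)$. If $\binom{2k}{k}\equiv 0\pmod 4$, then for every vertex $A$ of $X$ there is perfect state transfer from $A$ to $\{1,\ldots,2k\}\setminus A$ at time $\pi/2$.
   Context: $J(2k,k,i)$ is the graph on the $k$-subsets of $\{1,\ldots,2k\}$ with $A\sim B$ iff $|A\cap B|=i$; the union of several such graphs is the graph on the same vertex set whose edge set is the union of their edge sets. For a simple graph $X$ with adjacency matrix $A$, let $\mathcal{H}_X(t)=e^{itA}$; there is perfect state transfer from $u$ to $v\ne u$ at time $\tau$ if $|\mathcal{H}_X(\tau)_{u,v}|=1$. *)

theory Defs
  imports Complex_Main
begin

definition ksubsets :: "nat \<Rightarrow> nat set set" where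
  "ksubsets k = {A. A \<subseteq> {1..2*k} \<and> card A = k}"

definition J_adj :: "nat \<Rightarrow> nat \<Rightarrow> nat set \<Rightarrow> nat set \<Rightarrow> bool" where
  "J_adj k i A B \<longleftrightarrow> A \<in> ksubsets k \<and> B \<in> ksubsets k \<and> card (A \<inter> B) = i"

definition X_adj :: "nat \<Rightarrow> nat set \<Rightarrow> nat set \<Rightarrow> bool" where
  "X_adj k A B \<longleftrightarrow> (\<exists>i\<in>{1..k-1}. J_adj k i A B)"

definition adj_matrix :: "('a \<Rightarrow> 'a \<Rightarrow> bool) \<Rightarrow> 'a \<Rightarrow> 'a \<Rightarrow> complex" where
  "adj_matrix E u v = (if E u v then 1 else 0)"

fun mat_pow :: "'a set \<Rightarrow> ('a \<Rightarrow> 'a \<Rightarrow> complex) \<Rightarrow> nat \<Rightarrow> 'a \<Rightarrow> 'a \<Rightarrow> complex" where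
  "mat_pow V M 0 u v = (if u = v then 1 else 0)"
| "mat_pow V M (Suc n) u v = (\<Sum>w\<in>V. M u w * mat_pow V M n w v)"

definition mat_exp :: "'a set \<Rightarrow> ('a \<Rightarrow> 'a \<Rightarrow> complex) \<Rightarrow> 'a \<Rightarrow> 'a \<Rightarrow> complex" where
  "mat_exp V M u v = (\<Sum>n. mat_pow V M n u v / of_nat (fact n))"

definition transition :: "'a set \<Rightarrow> ('a \<Rightarrow> 'a \<Rightarrow> bool) \<Rightarrow> real \<Rightarrow> 'a \<Rightarrow> 'a \<Rightarrow> complex" where
  "transition V E t = mat_exp V (\<lambda>x y. \<i> * complex_of_real t * adj_matrix E x y)"

definition pst :: "'a set \<Rightarrow> ('a \<Rightarrow> 'a \<Rightarrow> bool) \<Rightarrow> 'a \<Rightarrow> 'a \<Rightarrow> real \<Rightarrow> bool" where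
  "pst V E u v tau \<longleftrightarrow> u \<in> V \<and> v \<in> V \<and> u \<noteq> v \<and> cmod (transition V E tau u v) = 1"

end

theory Submission
  imports Defs
begin

definition comp :: "nat \<Rightarrow> nat set \<Rightarrow> nat set" where
  "comp k u = {1..2*k} - u"

lemma ks_fin: "finite (ksubsets k)"
proof -
  have "ksubsets k \<subseteq> Pow {1..2*k}" by (auto simp: ksubsets_def)
  thus ?thesis by (rule finite_subset) simp
qed

lemma ks_card: "card (ksubsets k) = (2*k choose k)"
  using n_subsets[of "{1..2*k}" k] by (simp add: ksubsets_def)

lemma comp_in: "u \<in> ksubsets k \<Longrightarrow> comp k u \<in> ksubsets k"
proof -
  assume "u \<in> ksubsets k"
  hence s: "u \<subseteq> {1..2*k}" and c: "card u = k" by (auto simp: ksubsets_def)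
  have f: "finite u" using s finite_subset by blast
  have "card ({1..2*k} - u) = 2*k - k" using card_Diff_subset[OF f s] c by simp
  thus ?thesis unfolding ksubsets_def comp_def by auto
qed

lemma comp_comp: "u \<in> ksubsets k \<Longrightarrow> comp k (comp k u) = u"
  unfolding ksubsets_def comp_def by auto

lemma comp_neq: "u \<in> ksubsets k \<Longrightarrow> k \<ge> 1 \<Longrightarrow> comp k u \<noteq> u"
proof
  assume u: "u \<in> ksubsets k" and k: "k \<ge> 1" and e: "comp k u = u"
  have "u = {}" using e unfolding comp_def by blast
  thus False using u k by (simp add: ksubsets_def)
qed

lemma adj_iff:
  assumes u: "u \<in> ksubsets k" and w: "w \<in> ksubsets k"
  shows "X_adj k u w \<longleftrightarrow> (w \<noteq> u \<and> w \<noteq> comp k u)"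
proof -
  have fu: "finite u" "card u = k" "u \<subseteq> {1..2*k}" using u by (auto simp: ksubsets_def intro: finite_subset)
  have fw: "finite w" "card w = k" "w \<subseteq> {1..2*k}" using w by (auto simp: ksubsets_def intro: finite_subset)
  have le: "card (u \<inter> w) \<le> k" using fu by (metis card_mono inf_le1)
  have eqk: "card (u \<inter> w) = k \<longleftrightarrow> w = u"
  proof
    assume "card (u \<inter> w) = k"
    hence "u \<inter> w = u" using fu by (metis card_subset_eq inf_le1)
    hence "u \<subseteq> w" by blast
    thus "w = u" using fu fw card_subset_eq by metis
  qed (simp add: fu)
  have eq0: "card (u \<inter> w) = 0 \<longleftrightarrow> w = comp k u"
  proof
    assume "card (u \<inter> w) = 0"
    hence "u \<inter> w = {}" using fu by simp
    hence "w \<subseteq> comp k u" using fw by (auto simp: comp_def)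
    moreover have "card (comp k u) = k" using comp_in[OF u] by (simp add: ksubsets_def)
    moreover have "finite (comp k u)" by (simp add: comp_def)
    ultimately show "w = comp k u" using fw card_subset_eq by metis
  next
    assume "w = comp k u" thus "card (u \<inter> w) = 0" by (simp add: comp_def Int_Diff)
  qed
  show ?thesis unfolding X_adj_def J_adj_def
  proof
    assume "\<exists>i\<in>{1..k-1}. u \<in> ksubsets k \<and> w \<in> ksubsets k \<and> card (u \<inter> w) = i"
    then obtain i where "i \<in> {1..k-1}" "card (u \<inter> w) = i" by blast
    thus "w \<noteq> u \<and> w \<noteq> comp k u" using eqk eq0 by auto
  next
    assume "w \<noteq> u \<and> w \<noteq> comp k u"
    hence "card (u \<inter> w) \<in> {1..k-1}" using eqk eq0 le by auto
    thus "\<exists>i\<in>{1..k-1}. u \<in> ksubsets k \<and> w \<in> ksubsets k \<and> card (u \<inter> w) = i"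
      using u w by blast
  qed
qed

lemma sum_if_eq: "finite S \<Longrightarrow> x \<in> S \<Longrightarrow> (\<Sum>w\<in>S. if w = x then (a::complex) else 0) = a"
  by simp

lemma key_sum:
  assumes k: "k \<ge> 1" and u: "u \<in> ksubsets k" and v: "v \<in> ksubsets k"
  shows "(\<Sum>w\<in>ksubsets k. adj_matrix (X_adj k) u w *
           ((if w = v then a else 0) + (if w = comp k v then b else 0) + c))
       = (a+b) * (1 - (if u = v then 1 else 0) - (if u = comp k v then 1 else 0))
         + c * (of_nat (card (ksubsets k)) - 2)"
proof -
  let ?V = "ksubsets k"
  let ?f = "\<lambda>w. (if w = v then a else 0) + (if w = comp k v then b else 0) + (c::complex)"
  have cu: "comp k u \<in> ?V" using comp_in[OF u] .
  have cv: "comp k v \<in> ?V" using comp_in[OF v] .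
  have nu: "comp k u \<noteq> u" using comp_neq[OF u k] .
  have "(\<Sum>w\<in>?V. adj_matrix (X_adj k) u w * ?f w)
      = (\<Sum>w\<in>?V. ?f w - (if w = u then ?f u else 0) - (if w = comp k u then ?f (comp k u) else 0))"
    by (rule sum.cong) (auto simp: adj_matrix_def adj_iff[OF u] nu)
  also have "\<dots> = (\<Sum>w\<in>?V. ?f w) - ?f u - ?f (comp k u)"
    using ks_fin u cu by (simp add: sum_subtractf)
  also have "(\<Sum>w\<in>?V. ?f w) = a + b + c * of_nat (card ?V)"
    using ks_fin v cv unfolding sum.distrib by simp
  finally have eq: "(\<Sum>w\<in>?V. adj_matrix (X_adj k) u w * ?f w) = a + b + c * of_nat (card ?V) - ?f u - ?f (comp k u)" .
  have ccu: "comp k u = comp k v \<longleftrightarrow> u = v" using comp_comp[OF u] comp_comp[OF v] by metis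
  have cuv: "comp k u = v \<longleftrightarrow> u = comp k v" using comp_comp[OF u] comp_comp[OF v] by metis
  have nv: "comp k v \<noteq> v" using comp_neq[OF v k] .
  show ?thesis unfolding eq ccu cuv
    using nv by (cases "u = v"; cases "u = comp k v"; simp add: algebra_simps)
qed

definition ca :: "complex \<Rightarrow> nat \<Rightarrow> complex" where
  "ca z n = z^n * ((-2)^n + 0^n) / 2"
definition cb :: "complex \<Rightarrow> nat \<Rightarrow> complex" where
  "cb z n = z^n * ((-2)^n - 0^n) / 2"
definition cc :: "complex \<Rightarrow> complex \<Rightarrow> nat \<Rightarrow> complex" where
  "cc N z n = z^n * ((N-2)^n - (-2)^n) / N"

lemma pow_formula:
  assumes k: "k \<ge> 1" and v: "v \<in> ksubsets k"
  defines "N \<equiv> of_nat (card (ksubsets k)) :: complex"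
  shows "\<forall>u\<in>ksubsets k. mat_pow (ksubsets k) (\<lambda>x y. z * adj_matrix (X_adj k) x y) n u v
     = (if u = v then ca z n else 0) + (if u = comp k v then cb z n else 0) + cc N z n"
proof (induction n)
  case 0
  have "comp k v \<noteq> v" using comp_neq[OF v k] .
  then show ?case by (auto simp: ca_def cb_def cc_def)
next
  case (Suc n)
  have N0: "N \<noteq> 0" using v ks_fin unfolding N_def by (auto simp: card_eq_0_iff)
  have nv: "comp k v \<noteq> v" using comp_neq[OF v k] .
  have ab: "ca z n + cb z n = z^n * (-2)^n" by (simp add: ca_def cb_def field_simps)
  have aS: "ca z (Suc n) = z^Suc n * (-2)^Suc n / 2" by (simp add: ca_def)
  have bS: "cb z (Suc n) = z^Suc n * (-2)^Suc n / 2" by (simp add: cb_def)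
  have cS: "z * (z^n * (-2)^n + cc N z n * (N - 2)) = cc N z (Suc n)"
    using N0 by (simp add: cc_def field_simps)
  show ?case
  proof
    fix u assume u: "u \<in> ksubsets k"
    have "mat_pow (ksubsets k) (\<lambda>x y. z * adj_matrix (X_adj k) x y) (Suc n) u v
      = (\<Sum>w\<in>ksubsets k. z * (adj_matrix (X_adj k) u w *
           ((if w = v then ca z n else 0) + (if w = comp k v then cb z n else 0) + cc N z n)))"
      using Suc.IH by (auto intro!: sum.cong)
    also have "\<dots> = z * ((ca z n + cb z n) * (1 - (if u = v then 1 else 0) - (if u = comp k v then 1 else 0))
         + cc N z n * (N - 2))"
      unfolding sum_distrib_left[symmetric] key_sum[OF k u v] N_def ..
    finally have eq: "mat_pow (ksubsets k) (\<lambda>x y. z * adj_matrix (X_adj k) x y) (Suc n) u v = 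
       z * ((ca z n + cb z n) * (1 - (if u = v then 1 else 0) - (if u = comp k v then 1 else 0))
         + cc N z n * (N - 2))" .
    show "mat_pow (ksubsets k) (\<lambda>x y. z * adj_matrix (X_adj k) x y) (Suc n) u v
     = (if u = v then ca z (Suc n) else 0) + (if u = comp k v then cb z (Suc n) else 0) + cc N z (Suc n)"
      unfolding eq ab aS bS using nv cS
      by (cases "u = v"; cases "u = comp k v"; simp add: field_simps)
  qed
qed

lemma Es: "(\<lambda>n. x^n / fact n) sums exp (x::complex)"
  using exp_converges[of x] by (simp add: scaleR_conv_of_real divide_inverse mult.commute)

lemma exp1: "exp (-2 * (\<i> * complex_of_real (pi/2))) = -1"
proof -
  have "-2 * (\<i> * complex_of_real (pi/2)) = - (\<i> * of_real pi)" by simp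
  thus ?thesis by (simp add: exp_minus)
qed

lemma exp2:
  assumes "N = of_nat (4*m)"
  shows "exp ((N - 2) * (\<i> * complex_of_real (pi/2))) = -1"
proof -
  have "(N - 2) * (\<i> * complex_of_real (pi/2)) = of_nat m * (2 * of_real pi * \<i>) - \<i> * of_real pi"
    using assms by (simp add: field_simps)
  hence "exp ((N - 2) * (\<i> * complex_of_real (pi/2))) = exp (2 * of_real pi * \<i>) ^ m / exp (\<i> * of_real pi)"
    by (simp only: exp_diff exp_of_nat_mult)
  thus ?thesis by simp
qed

theorem mainTheorem18:
  fixes k :: nat and A :: "nat set"
  assumes "k \<ge> 2"
    and "(2*k choose k) mod 4 = 0"
    and "A \<in> ksubsets k"
  shows "pst (ksubsets k) (X_adj k) A ({1..2*k} - A) (pi / 2)"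
proof -
  let ?V = "ksubsets k"
  define z where "z = \<i> * complex_of_real (pi/2)"
  define N where "N = (of_nat (card ?V) :: complex)"
  define v where "v = comp k A"
  have k: "k \<ge> 1" using assms(1) by simp
  have A: "A \<in> ?V" by fact
  have v: "v \<in> ?V" unfolding v_def using comp_in[OF A] .
  have Av: "A \<noteq> v" unfolding v_def using comp_neq[OF A k] by metis
  have Acv: "A = comp k v" unfolding v_def using comp_comp[OF A] by simp
  obtain m where m: "card ?V = 4*m" using assms(2) ks_card by (metis dvd_def mod_0_imp_dvd)
  have N0: "N \<noteq> 0" using v ks_fin unfolding N_def by (auto simp: card_eq_0_iff)
  have Nm: "N = of_nat (4*m)" unfolding N_def m ..
  have pw: "\<And>n. mat_pow ?V (\<lambda>x y. z * adj_matrix (X_adj k) x y) n A v = cb z n + cc N z n"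
    using pow_formula[OF k v, of z] Av Acv A unfolding N_def by auto
  have trm: "\<And>n. (cb z n + cc N z n) / of_nat (fact n) =
      (1/2 - 1/N) * ((-2*z)^n / fact n) - 1/2 * (0^n / fact n) + 1/N * (((N-2)*z)^n / fact n)"
  proof -
    fix n
    show "(cb z n + cc N z n) / of_nat (fact n) =
      (1/2 - 1/N) * ((-2*z)^n / fact n) - 1/2 * (0^n / fact n) + 1/N * (((N-2)*z)^n / fact n)"
    proof -
      have b: "cb z n = ((-2*z)^n - 0^n)/2"
        unfolding power_mult_distrib cb_def by (cases n) (simp_all add: mult.commute)
      have c: "cc N z n = (((N-2)*z)^n - (-2*z)^n)/N"
        unfolding power_mult_distrib cc_def by (simp add: mult.commute right_diff_distrib)
      show ?thesis unfolding b c using N0 by (simp add: field_simps)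
    qed
  qed
  have "(\<lambda>n. (1/2 - 1/N) * ((-2*z)^n / fact n) - 1/2 * (0^n / fact n) + 1/N * (((N-2)*z)^n / fact n))
      sums ((1/2 - 1/N) * exp (-2*z) - 1/2 * exp 0 + 1/N * exp ((N-2)*z))"
    by (intro sums_add sums_diff sums_mult Es)
  moreover have "(1/2 - 1/N) * exp (-2*z) - 1/2 * exp 0 + 1/N * exp ((N-2)*z) = -1"
    unfolding z_def exp1 exp2[OF Nm] using N0 by (simp add: field_simps)
  ultimately have "(\<lambda>n. (cb z n + cc N z n) / of_nat (fact n)) sums (-1)"
    unfolding trm by simp
  hence "(\<lambda>n. mat_pow ?V (\<lambda>x y. z * adj_matrix (X_adj k) x y) n A v / of_nat (fact n)) sums (-1)"
    unfolding pw .
  hence "transition ?V (X_adj k) (pi/2) A v = -1"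
    unfolding transition_def mat_exp_def z_def by (simp add: sums_iff)
  moreover have "{1..2*k} - A = v" unfolding v_def comp_def ..
  ultimately show ?thesis unfolding pst_def using A v Av by simp
qed

end
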